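(* Let $a<0$, $b>0$, $c\in(0,1)$, $d>0$, and set $\pi_0=bd(1-c)^a/(1+bd(1-c)^a)$. (i) If $Z\sim\mathrm{NB}(\pi_0,1/d)$ and $W_1,W_2,\dots$ are i.i.d. $\mathrm{NB}(c,-a)$ independent of $Z$, then $\sum_{i=1}^Z W_i\sim\mathrm{TDL}(a,b,c,d)$. (ii) If $Z\sim\mathrm{NB}(\pi_0,1/d)$ and, conditionally on $Z$, $X\sim\mathrm{NB}(c,-aZ)$ (point mass at $0$ when $Z=0$), then $X\sim\mathrm{TDL}(a,b,c,d)$. (iii) Let $G_1$ be Gamma with Laplace transform $(1+bd(1-c)^a t)^{-1/d}$; conditionally on $G_1$ let $N$ be Poisson with mean $G_1$; conditionally on $(G_1,N)$ let $G_2$ be Gamma with scale $c/(1-c)$ and shape $-aN$ (Laplace transform $(1+ct/(1-c))^{aN}$, point mass at $0$ if $N=0$); conditionally on $(G_1,N,G_2)$ let $X$ be Poisson with mean $G_2$. Then $X\sim\mathrm{TDL}(a,b,c,d)$.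
   Context: $\mathrm{NB}(\pi,\delta)$, $\pi\in(0,1)$, $\delta>0$: law on $\mathbb{N}$ with pgf $((1-\pi)/(1-\pi s))^\delta$. $\mathrm{TDL}(a,b,c,d)$: law on $\mathbb{N}$ with pgf $\big(1+\operatorname{sgn}(a)\,b\,d\,((1-cs)^a-(1-c)^a)\big)^{-1/d}$, $s\in[0,1]$, where $\operatorname{sgn}$ is the sign function (so $\operatorname{sgn}(a)=-1$ here). An empty sum equals $0$. *)

theory Defs
  imports "HOL-Probability.Probability"
begin

definition pgf :: "nat measure \<Rightarrow> real \<Rightarrow> real" where
  "pgf L s = (\<integral>k. s ^ k \<partial>L)"

definition law_with_pgf :: "nat measure \<Rightarrow> (real \<Rightarrow> real) \<Rightarrow> bool" where
  "law_with_pgf L G \<longleftrightarrow> prob_space L \<and> sets L = sets (count_space UNIV) \<and>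
     (\<forall>s\<in>{0..1}. pgf L s = G s)"

definition nb_pgf :: "real \<Rightarrow> real \<Rightarrow> real \<Rightarrow> real" where
  "nb_pgf p \<delta> s = ((1 - p) / (1 - p * s)) powr \<delta>"

definition tdl_pgf :: "real \<Rightarrow> real \<Rightarrow> real \<Rightarrow> real \<Rightarrow> real \<Rightarrow> real" where
  "tdl_pgf a b c d s =
     (1 + sgn a * b * d * ((1 - c * s) powr a - (1 - c) powr a)) powr (- 1 / d)"

definition is_NB :: "nat measure \<Rightarrow> real \<Rightarrow> real \<Rightarrow> bool" where
  "is_NB L p \<delta> \<longleftrightarrow> law_with_pgf L (nb_pgf p \<delta>)"

definition is_TDL :: "nat measure \<Rightarrow> real \<Rightarrow> real \<Rightarrow> real \<Rightarrow> real \<Rightarrow> bool" where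
  "is_TDL L a b c d \<longleftrightarrow> law_with_pgf L (tdl_pgf a b c d)"

text \<open>Poisson law with mean mu >= 0 (point mass at 0 when mu = 0).\<close>
definition poisson_law :: "real \<Rightarrow> nat measure" where
  "poisson_law \<mu> = density (count_space UNIV) (\<lambda>k. ennreal (\<mu> ^ k / fact k * exp (- \<mu>)))"

text \<open>Gamma law with shape k and scale theta (point mass at 0 when k = 0);
  its Laplace transform is (1 + theta t) powr (-k).\<close>
definition gamma_law :: "real \<Rightarrow> real \<Rightarrow> real measure" where
  "gamma_law k \<theta> = (if k = 0 then return borel 0 else
     density lborel (\<lambda>x. ennreal (if 0 < x then
        x powr (k - 1) * exp (- x / \<theta>) / (Gamma k * \<theta> powr k) else 0)))"

end

theory Submission
  imports Defs
begin


lemma bind_fix: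
  assumes f': "f' \<in> M \<rightarrow>\<^sub>M subprob_algebra N"
    and S: "S \<in> sets M" and ae: "AE x in M. x \<in> S"
    and eq: "\<And>x. x \<in> S \<Longrightarrow> f x = f' x"
    and out: "\<And>x. x \<in> space M \<Longrightarrow> x \<notin> S \<Longrightarrow> f x \<notin> space (subprob_algebra N)"
    and st: "\<And>x. x \<in> space M \<Longrightarrow> sets (f x) = sets N"
    and ne: "space M \<noteq> {}"
  shows "bind M f = bind M f'"
proof -
  have x0: "(SOME x. x \<in> space M) \<in> space M" using ne by (simp add: some_in_eq)
  have SA: "subprob_algebra (f (SOME x. x \<in> space M)) = subprob_algebra N"
    using st[OF x0] by (rule subprob_algebra_cong)
  have Ssub: "S \<subseteq> space M" using S sets.sets_into_space by blast
  have "distr M (subprob_algebra N) f = distr M (subprob_algebra N) f'"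
    unfolding distr_def
  proof (rule measure_of_eq)
    show "sets (subprob_algebra N) \<subseteq> Pow (space (subprob_algebra N))"
      using sets.sets_into_space by blast
  next
    fix A assume "A \<in> sigma_sets (space (subprob_algebra N)) (sets (subprob_algebra N))"
    hence A: "A \<in> sets (subprob_algebra N)" by (simp add: sets.sigma_sets_eq)
    hence Asub: "A \<subseteq> space (subprob_algebra N)" using sets.sets_into_space by blast
    have e1: "f -` A \<inter> space M = f' -` A \<inter> S"
      using Asub eq out Ssub by (auto, metis subsetD)
    have m: "f' -` A \<inter> space M \<in> sets M" using f' A by (rule measurable_sets)
    have m2: "f' -` A \<inter> S \<in> sets M"
    proof -
      have "f' -` A \<inter> S = (f' -` A \<inter> space M) \<inter> S" using Ssub by auto
      thus ?thesis using m S by auto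
    qed
    show "emeasure M (f -` A \<inter> space M) = emeasure M (f' -` A \<inter> space M)"
      unfolding e1 by (rule emeasure_eq_AE) (use ae m m2 in auto)
  qed
  thus ?thesis
    using bind_nonempty[OF ne, of f] bind_nonempty''[OF f' ne] SA by simp
qed



lemma sets_poisson[simp]: "sets (poisson_law \<mu>) = sets (count_space UNIV)"
  by (simp add: poisson_law_def)

lemma space_poisson[simp]: "space (poisson_law \<mu>) = UNIV"
  by (simp add: poisson_law_def)

lemma poisson_nn: "(\<integral>\<^sup>+ k. f k \<partial>poisson_law \<mu>) = (\<Sum>k. ennreal (\<mu> ^ k / fact k * exp (- \<mu>)) * f k)"
  unfolding poisson_law_def
  by (subst nn_integral_density) (auto simp: nn_integral_count_space_nat)

lemma poisson_pgf:
  assumes "\<mu> \<ge> 0" "u \<ge> 0"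
  shows "(\<integral>\<^sup>+ k. ennreal (u ^ k) \<partial>poisson_law \<mu>) = ennreal (exp (\<mu> * (u - 1)))"
proof -
  have s: "(\<lambda>k. (\<mu> * u) ^ k / fact k * exp (- \<mu>)) sums (exp (\<mu> * u) * exp (- \<mu>))"
    using sums_mult2[OF exp_converges[of "\<mu> * u"], of "exp (- \<mu>)"]
    by (simp add: divide_inverse mult.commute)
  have "(\<integral>\<^sup>+ k. ennreal (u ^ k) \<partial>poisson_law \<mu>) = (\<Sum>k. ennreal ((\<mu> * u) ^ k / fact k * exp (- \<mu>)))"
    unfolding poisson_nn using assms
    by (intro suminf_cong) (auto simp: ennreal_mult'[symmetric] power_mult_distrib)
  also have "\<dots> = ennreal (\<Sum>k. (\<mu> * u) ^ k / fact k * exp (- \<mu>))"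
    using assms s by (intro suminf_ennreal2) (auto dest: sums_summable)
  also have "(\<Sum>k. (\<mu> * u) ^ k / fact k * exp (- \<mu>)) = exp (\<mu> * (u - 1))"
  proof -
    have "exp (\<mu> * (u-1)) = exp (\<mu>*u) * exp(-\<mu>)" by (simp add: mult_exp_exp algebra_simps)
    thus ?thesis using sums_unique[OF s] by simp
  qed
  finally show ?thesis .
qed

lemma prob_poisson: "\<mu> \<ge> 0 \<Longrightarrow> prob_space (poisson_law \<mu>)"
proof (rule prob_spaceI)
  assume "\<mu> \<ge> 0"
  have "emeasure (poisson_law \<mu>) (space (poisson_law \<mu>)) = (\<integral>\<^sup>+ k. ennreal (1 ^ k) \<partial>poisson_law \<mu>)"
    by (simp add: nn_integral_const)
  also have "\<dots> = 1" using poisson_pgf[of \<mu> 1] \<open>\<mu> \<ge> 0\<close> by simp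
  finally show "emeasure (poisson_law \<mu>) (space (poisson_law \<mu>)) = 1" .
qed

lemma poisson_not_subprob:
  assumes "\<mu> < 0" shows "poisson_law \<mu> \<notin> space (subprob_algebra N)"
proof
  assume "poisson_law \<mu> \<in> space (subprob_algebra N)"
  hence "subprob_space (poisson_law \<mu>)" by (simp add: space_subprob_algebra)
  hence le: "emeasure (poisson_law \<mu>) {0} \<le> 1" by (rule subprob_space.subprob_emeasure_le_1)
  have "emeasure (poisson_law \<mu>) {0} = ennreal (exp (- \<mu>))"
    unfolding poisson_law_def
    by (subst emeasure_density) (auto simp: nn_integral_count_space_indicator[symmetric])
  moreover have "exp (- \<mu>) > 1" using assms by simp
  ultimately show False using le by simp
qed

lemma poisson_kernel_meas:
  "(\<lambda>x. poisson_law (max x 0)) \<in> borel \<rightarrow>\<^sub>M subprob_algebra (count_space UNIV)"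
proof (rule measurable_subprob_algebra)
  fix x :: real show "subprob_space (poisson_law (max x 0))"
    using prob_poisson[of "max x 0"] by (simp add: prob_space_imp_subprob_space)
next
  fix x :: real show "sets (poisson_law (max x 0)) = sets (count_space UNIV)" by simp
next
  fix A :: "nat set" assume "A \<in> sets (count_space UNIV)"
  have "(\<lambda>x. emeasure (poisson_law (max x 0)) A) =
     (\<lambda>x. \<Sum>k. ennreal ((max x 0) ^ k / fact k * exp (- (max x 0))) * indicator A k)"
    by (rule ext, simp add: poisson_nn flip: nn_integral_indicator) 
  also have "\<dots> \<in> borel_measurable borel" by measurable
  finally show "(\<lambda>x. emeasure (poisson_law (max x 0)) A) \<in> borel_measurable borel" .
qed



lemma sets_gamma[simp]: "sets (gamma_law k \<theta>) = sets borel"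
  by (simp add: gamma_law_def)

lemma space_gamma[simp]: "space (gamma_law k \<theta>) = UNIV"
  by (simp add: gamma_law_def)

lemma gamma_ae_nonneg: "AE x in gamma_law k \<theta>. 0 \<le> x"
  unfolding gamma_law_def
  by (auto simp: AE_density AE_return)

lemma Gamma_integral_nn:
  assumes "k > 0"
  shows "(\<integral>\<^sup>+ y. ennreal (indicator {0..} y * (y powr (k - 1) / exp y)) \<partial>lborel) = ennreal (Gamma k)"
  using nn_integral_has_integral_lebesgue[OF _ Gamma_integral_real[OF assms]]
  by (simp add: indicator_mult_ennreal mult.commute)

lemma gamma_laplace_pos:
  assumes k: "k > 0" and th: "\<theta> > 0" and t: "t \<ge> 0"
  shows "(\<integral>\<^sup>+ x. ennreal (exp (- t * x)) \<partial>gamma_law k \<theta>) = ennreal ((1 + \<theta> * t) powr (- k))"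
proof -
  define l where "l = 1 / \<theta> + t"
  define C where "C = Gamma k * \<theta> powr k"
  have l: "l > 0" using th t by (simp add: l_def add_pos_nonneg)
  have C: "C > 0" using k th by (simp add: C_def)
  define h where "h x = (if 0 < x then x powr (k - 1) * exp (- l * x) / C else 0)" for x
  have "(\<integral>\<^sup>+ x. ennreal (exp (- t * x)) \<partial>gamma_law k \<theta>) = (\<integral>\<^sup>+ x. ennreal (h x) \<partial>lborel)"
    unfolding gamma_law_def using k
    apply (simp add: C_def[symmetric])
    apply (subst nn_integral_density)
      apply (simp_all add: C_def)
    apply (intro nn_integral_cong)
    apply (auto simp: h_def ennreal_mult'[symmetric] l_def mult_exp_exp C_def algebra_simps)
    done
  also have "\<dots> = ennreal (1 / l) * (\<integral>\<^sup>+ y. ennreal (h (0 + (1 / l) * y)) \<partial>lborel)"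
    using l by (subst nn_integral_real_affine[of _ "1 / l" 0]) (auto simp: h_def)
  also have "(\<lambda>y. ennreal (h (0 + (1 / l) * y))) =
      (\<lambda>y. ennreal (l powr (1 - k) / C) * ennreal (indicator {0..} y * (y powr (k - 1) / exp y)))"
  proof
    fix y :: real
    show "ennreal (h (0 + (1 / l) * y)) = ennreal (l powr (1 - k) / C) * ennreal (indicator {0..} y * (y powr (k - 1) / exp y))"
    proof (cases "0 < y")
      case True
      have "(y / l) powr (k - 1) = y powr (k - 1) / l powr (k - 1)"
        using True l by (simp add: powr_divide)
      moreover have "l powr (1 - k) = 1 / l powr (k - 1)"
        using l by (simp add: powr_minus_divide[symmetric] powr_minus)
      ultimately have hh: "(y / l) powr (k - 1) = l powr (1 - k) * y powr (k - 1)" by simp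
      have "h (0 + (1 / l) * y) = l powr (1 - k) / C * (indicator {0..} y * (y powr (k - 1) / exp y))"
        using True l by (simp add: h_def hh[unfolded divide_inverse] exp_minus divide_inverse mult_ac)
      moreover have "l powr (1 - k) / C \<ge> 0" using C by simp
      ultimately show ?thesis using True by (simp add: ennreal_mult'[symmetric])
    next
      case False
      thus ?thesis using l by (cases "y = 0") (auto simp: h_def field_simps)
    qed
  qed
  also have "(\<integral>\<^sup>+ y. ennreal (l powr (1 - k) / C) * ennreal (indicator {0..} y * (y powr (k - 1) / exp y)) \<partial>lborel)
      = ennreal (l powr (1 - k) / C) * ennreal (Gamma k)"
    by (subst nn_integral_cmult) (auto simp del: times_divide_eq_right simp: Gamma_integral_nn[OF k])
  also have "ennreal (1 / l) * (ennreal (l powr (1 - k) / C) * ennreal (Gamma k)) =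
     ennreal (1 / l * (l powr (1 - k) / C) * Gamma k)"
    using l C k by (simp add: ennreal_mult'[symmetric] mult.assoc)
  also have "1 / l * (l powr (1 - k) / C) * Gamma k = (1 + \<theta> * t) powr (- k)"
  proof -
    have "1 + \<theta> * t = \<theta> * l" using th by (simp add: l_def field_simps)
    hence "(1 + \<theta> * t) powr (- k) = \<theta> powr (- k) * l powr (- k)"
      using th l by (simp add: powr_mult)
    moreover have "l powr (1 - k) = l * l powr (- k)"
      using l powr_add[of l 1 "- k"] by simp
    moreover have "\<theta> powr (- k) = 1 / \<theta> powr k" using th by (simp add: powr_minus divide_inverse)
    moreover have "Gamma k \<noteq> 0" using Gamma_real_pos[OF k] by simp
    ultimately show ?thesis using l C k th by (simp add: C_def field_simps)
  qed
  finally show ?thesis .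
qed

lemma gamma_laplace:
  assumes k: "k \<ge> 0" and th: "\<theta> > 0" and t: "t \<ge> 0"
  shows "(\<integral>\<^sup>+ x. ennreal (exp (- t * x)) \<partial>gamma_law k \<theta>) = ennreal ((1 + \<theta> * t) powr (- k))"
proof (cases "k = 0")
  case True
  have "0 \<le> \<theta> * t" using th t by simp
  thus ?thesis using True by (simp add: gamma_law_def nn_integral_return)
next
  case False thus ?thesis using gamma_laplace_pos[of k \<theta> t] assms by simp
qed

lemma prob_gamma:
  assumes k: "k \<ge> 0" and th: "\<theta> > 0"
  shows "prob_space (gamma_law k \<theta>)"
proof (rule prob_spaceI)
  have "emeasure (gamma_law k \<theta>) (space (gamma_law k \<theta>)) = (\<integral>\<^sup>+ x. ennreal (exp (- 0 * x)) \<partial>gamma_law k \<theta>)"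
    by (simp add: nn_integral_const)
  also have "\<dots> = 1" using gamma_laplace[OF k th, of 0] by simp
  finally show "emeasure (gamma_law k \<theta>) (space (gamma_law k \<theta>)) = 1" .
qed



lemma poisson_emeasure0: "emeasure (poisson_law \<mu>) {0} = ennreal (exp (- \<mu>))"
  unfolding poisson_law_def
  by (subst emeasure_density) (auto simp: nn_integral_count_space_indicator[symmetric])

lemma mix_pgf:
  fixes Qk :: "nat \<Rightarrow> nat measure"
  assumes k: "k \<ge> 0" and th: "\<theta> > 0" and v: "0 \<le> v" "v \<le> 1"
    and Q: "Qk \<in> count_space UNIV \<rightarrow>\<^sub>M subprob_algebra (count_space UNIV)"
    and Qp: "\<And>n. prob_space (Qk n)"
    and Qu: "\<And>n. (\<integral>\<^sup>+ m. ennreal (u ^ m) \<partial>Qk n) = ennreal (v ^ n)"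
  shows "(\<integral>\<^sup>+ m. ennreal (u ^ m) \<partial>(gamma_law k \<theta> \<bind> (\<lambda>g. poisson_law g \<bind> Qk)))
          = ennreal ((1 + \<theta> * (1 - v)) powr (- k))"
    and "sets (gamma_law k \<theta> \<bind> (\<lambda>g. poisson_law g \<bind> Qk)) = sets (count_space UNIV)"
proof -
  define R where "R g = poisson_law g \<bind> Qk" for g
  define R' where "R' g = R (max g 0)" for g
  have stQ: "sets (Qk n) = sets (count_space UNIV)" for n
    using sets_kernel[OF Q] by simp
  have stR: "sets (R g) = sets (count_space UNIV)" for g
    unfolding R_def by (subst sets_bind[where N="count_space UNIV"]) (auto simp: stQ)
  have QP: "Qk \<in> poisson_law g \<rightarrow>\<^sub>M subprob_algebra (count_space UNIV)" for g
    by (subst measurable_cong_sets[OF sets_poisson refl]) (rule Q)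
  have R'm: "R' \<in> borel \<rightarrow>\<^sub>M subprob_algebra (count_space UNIV)"
    unfolding R'_def R_def by (rule measurable_bind2[OF poisson_kernel_meas Q])
  have R'm2: "R' \<in> gamma_law k \<theta> \<rightarrow>\<^sub>M subprob_algebra (count_space UNIV)"
    using R'm by (simp cong: measurable_cong_sets)
  have out: "R x \<notin> space (subprob_algebra (count_space UNIV))" if x: "x < 0" for x
  proof
    assume "R x \<in> space (subprob_algebra (count_space UNIV))"
    hence "subprob_space (R x)" by (simp add: space_subprob_algebra)
    hence le: "emeasure (R x) UNIV \<le> 1" by (rule subprob_space.subprob_emeasure_le_1)
    have "emeasure (R x) UNIV = (\<integral>\<^sup>+ n. emeasure (Qk n) UNIV \<partial>poisson_law x)"
      unfolding R_def by (subst emeasure_bind[OF _ QP]) auto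
    also have "\<dots> = (\<integral>\<^sup>+ n. 1 \<partial>poisson_law x)"
      using Qp prob_space.emeasure_space_1[of "Qk _"] stQ
      by (intro nn_integral_cong) (metis sets_eq_imp_space_eq space_count_space)
    also have "\<dots> = emeasure (poisson_law x) UNIV"
      by (metis nn_integral_const space_poisson mult_1)
    also have "\<dots> \<ge> emeasure (poisson_law x) {0}" by (intro emeasure_mono) auto
    finally have "ennreal (exp (- x)) \<le> emeasure (R x) UNIV" using poisson_emeasure0[of x] by simp
    hence "ennreal (exp (- x)) \<le> 1" using le by (rule order_trans)
    hence "exp (- x) \<le> 1" by simp
    thus False using x by simp
  qed
  have eqb: "gamma_law k \<theta> \<bind> R = gamma_law k \<theta> \<bind> R'"
  proof (rule bind_fix[OF R'm2, of "{0..}"])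
    show "{0..} \<in> sets (gamma_law k \<theta>)" by simp
    show "AE x in gamma_law k \<theta>. x \<in> {0..}" using gamma_ae_nonneg by simp
    show "\<And>x. x \<in> {0..} \<Longrightarrow> R x = R' x" by (simp add: R'_def)
    show "\<And>x. x \<in> space (gamma_law k \<theta>) \<Longrightarrow> x \<notin> {0..} \<Longrightarrow> R x \<notin> space (subprob_algebra (count_space UNIV))"
      using out by simp
    show "\<And>x. x \<in> space (gamma_law k \<theta>) \<Longrightarrow> sets (R x) = sets (count_space UNIV)" using stR by simp
    show "space (gamma_law k \<theta>) \<noteq> {}" by simp
  qed
  have inner: "(\<integral>\<^sup>+ m. ennreal (u ^ m) \<partial>R' x) = ennreal (exp (max x 0 * (v - 1)))" for x
  proof -
    have "(\<integral>\<^sup>+ m. ennreal (u ^ m) \<partial>R' x) = (\<integral>\<^sup>+ n. \<integral>\<^sup>+ m. ennreal (u ^ m) \<partial>Qk n \<partial>poisson_law (max x 0))"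
      unfolding R'_def R_def
      by (subst nn_integral_bind[OF _ QP]) auto
    also have "\<dots> = (\<integral>\<^sup>+ n. ennreal (v ^ n) \<partial>poisson_law (max x 0))" by (simp add: Qu)
    also have "\<dots> = ennreal (exp (max x 0 * (v - 1)))" using v by (intro poisson_pgf) auto
    finally show ?thesis .
  qed
  have "(\<integral>\<^sup>+ m. ennreal (u ^ m) \<partial>(gamma_law k \<theta> \<bind> R)) = (\<integral>\<^sup>+ x. \<integral>\<^sup>+ m. ennreal (u ^ m) \<partial>R' x \<partial>gamma_law k \<theta>)"
    unfolding eqb by (subst nn_integral_bind[OF _ R'm2]) auto
  also have "\<dots> = (\<integral>\<^sup>+ x. ennreal (exp (- (1 - v) * x)) \<partial>gamma_law k \<theta>)"
    unfolding inner
    by (intro nn_integral_cong_AE, use gamma_ae_nonneg in eventually_elim) (auto simp: algebra_simps)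
  also have "\<dots> = ennreal ((1 + \<theta> * (1 - v)) powr (- k))"
    using k th v by (intro gamma_laplace) auto
  finally show "(\<integral>\<^sup>+ m. ennreal (u ^ m) \<partial>(gamma_law k \<theta> \<bind> (\<lambda>g. poisson_law g \<bind> Qk)))
          = ennreal ((1 + \<theta> * (1 - v)) powr (- k))" unfolding R_def .
  show "sets (gamma_law k \<theta> \<bind> (\<lambda>g. poisson_law g \<bind> Qk)) = sets (count_space UNIV)"
    using stR unfolding R_def by (subst sets_bind[where N="count_space UNIV"]) auto
qed



lemma pgf_from_nn:
  assumes L: "sets L = sets (count_space UNIV)" and s: "s \<ge> 0" and r: "r \<ge> 0"
    and I: "(\<integral>\<^sup>+ k. ennreal (s ^ k) \<partial>L) = ennreal r"
  shows "pgf L s = r"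
proof -
  have m: "(\<lambda>k. s ^ k) \<in> borel_measurable L"
    by (subst measurable_cong_sets[OF L refl]) simp
  have "pgf L s = enn2real (\<integral>\<^sup>+ k. ennreal (s ^ k) \<partial>L)"
    unfolding pgf_def using s by (intro integral_eq_nn_integral m) auto
  thus ?thesis using I r by simp
qed

lemma prob_from_nn:
  assumes L: "sets L = sets (count_space UNIV)"
    and I: "(\<integral>\<^sup>+ k. ennreal (1 ^ k) \<partial>L) = ennreal 1"
  shows "prob_space L"
proof (rule prob_spaceI)
  have "space L = UNIV" using sets_eq_imp_space_eq[OF L] by simp
  thus "emeasure L (space L) = 1" using I by (simp add: nn_integral_const)
qed

lemma gp_inner:
  assumes k: "k \<ge> 0" and th: "\<theta> > 0" and u: "0 \<le> u" "u \<le> 1"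
  shows "(\<integral>\<^sup>+ m. ennreal (u ^ m) \<partial>(gamma_law k \<theta> \<bind> poisson_law)) = ennreal ((1 + \<theta> * (1 - u)) powr (- k))"
    and "sets (gamma_law k \<theta> \<bind> poisson_law) = sets (count_space UNIV)"
proof -
  have e: "gamma_law k \<theta> \<bind> poisson_law = gamma_law k \<theta> \<bind> (\<lambda>g. poisson_law g \<bind> return (count_space UNIV))"
    by (intro bind_cong refl) (simp add: bind_return'')
  have Q: "return (count_space UNIV) \<in> count_space UNIV \<rightarrow>\<^sub>M subprob_algebra (count_space (UNIV :: nat set))"
    by (rule return_measurable)
  have Qp: "prob_space (return (count_space UNIV) n)" for n :: nat by (simp add: prob_space_return)
  have Qu: "(\<integral>\<^sup>+ m. ennreal (u ^ m) \<partial>return (count_space UNIV) n) = ennreal (u ^ n)" for n :: nat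
    by (simp add: nn_integral_return)
  show "(\<integral>\<^sup>+ m. ennreal (u ^ m) \<partial>(gamma_law k \<theta> \<bind> poisson_law)) = ennreal ((1 + \<theta> * (1 - u)) powr (- k))"
    unfolding e by (rule mix_pgf(1)[OF k th u Q Qp Qu])
  show "sets (gamma_law k \<theta> \<bind> poisson_law) = sets (count_space UNIV)"
    unfolding e by (rule mix_pgf(2)[OF k th u Q Qp Qu])
qed

lemma part3:
  fixes a b c d :: real
  assumes ha: "a < 0" and hb: "b > 0" and hc: "0 < c" "c < 1" and hd: "d > 0"
  shows "is_TDL (gamma_law (1 / d) (b * d * (1 - c) powr a) \<bind> (\<lambda>g\<^sub>1.
              poisson_law g\<^sub>1 \<bind> (\<lambda>n.
              gamma_law (- a * real n) (c / (1 - c)) \<bind> (\<lambda>g\<^sub>2.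
              poisson_law g\<^sub>2)))) a b c d"
proof -
  define \<theta> where "\<theta> = c / (1 - c)"
  define B where "B = b * d * (1 - c) powr a"
  define Qk where "Qk n = gamma_law (- a * real n) \<theta> \<bind> poisson_law" for n :: nat
  define L where "L = gamma_law (1 / d) B \<bind> (\<lambda>g. poisson_law g \<bind> Qk)"
  have th: "\<theta> > 0" using hc by (simp add: \<theta>_def)
  have Bp: "B > 0" using hb hd hc by (simp add: B_def)
  have kn: "- a * real n \<ge> 0" for n :: nat using ha by (simp add: mult_nonpos_nonneg)
  have Qsets: "sets (Qk n) = sets (count_space UNIV)" for n
    unfolding Qk_def using gp_inner(2)[OF kn th, of 1] by simp
  define vv where "vv u = (1 + \<theta> * (1 - u)) powr a" for u
  have Qu: "(\<integral>\<^sup>+ m. ennreal (u ^ m) \<partial>Qk n) = ennreal (vv u ^ n)" if u: "0 \<le> u" "u \<le> 1" for u n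
  proof -
    have pos: "1 + \<theta> * (1 - u) > 0" using th u by (simp add: add_pos_nonneg)
    have "(1 + \<theta> * (1 - u)) powr (- (- a * real n)) = vv u ^ n"
      unfolding vv_def using pos by (simp add: powr_powr[symmetric] powr_realpow)
    thus ?thesis unfolding Qk_def using gp_inner(1)[OF kn th u, of n] by simp
  qed
  have Qp: "prob_space (Qk n)" for n
    by (rule prob_from_nn[OF Qsets]) (use Qu[of 1 n] in \<open>simp add: vv_def\<close>)
  have Q: "Qk \<in> count_space UNIV \<rightarrow>\<^sub>M subprob_algebra (count_space UNIV)"
    using Qp Qsets by (auto simp: space_subprob_algebra prob_space_imp_subprob_space)
  have vv: "0 \<le> vv u" "vv u \<le> 1" if "0 \<le> u" "u \<le> 1" for u
  proof -
    have ge: "1 + \<theta> * (1 - u) \<ge> 1" using th that by simp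
    show "0 \<le> vv u" unfolding vv_def by simp
    have "1 \<le> (1 + \<theta> * (1 - u)) powr (- a)" using ge ha by (intro ge_one_powr_ge_zero) auto
    moreover have "(1 + \<theta> * (1 - u)) powr a = 1 / (1 + \<theta> * (1 - u)) powr (- a)"
      by (simp add: powr_minus divide_inverse)
    ultimately show "vv u \<le> 1" unfolding vv_def by (simp add: divide_le_eq_1)
  qed
  have LI: "(\<integral>\<^sup>+ m. ennreal (u ^ m) \<partial>L) = ennreal ((1 + B * (1 - vv u)) powr (- (1 / d)))"
    if "0 \<le> u" "u \<le> 1" for u
    unfolding L_def using hd Bp vv[OF that] Q Qp Qu[OF that]
    by (intro mix_pgf(1)) auto
  have Ls: "sets L = sets (count_space UNIV)"
    unfolding L_def using hd Bp vv[of 1] Q Qp Qu[of 1]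
    by (intro mix_pgf(2)[where u=1]) auto
  have "is_TDL L a b c d"
    unfolding is_TDL_def law_with_pgf_def
  proof (intro conjI ballI)
    show "prob_space L" by (rule prob_from_nn[OF Ls]) (use LI[of 1] in \<open>simp add: vv_def\<close>)
    show "sets L = sets (count_space UNIV)" by (rule Ls)
    fix s :: real assume s: "s \<in> {0..1}"
    have alg: "(1 + B * (1 - vv s)) powr (- (1 / d)) = tdl_pgf a b c d s"
    proof -
      have "1 + \<theta> * (1 - s) = (1 - c * s) / (1 - c)" using hc by (simp add: \<theta>_def field_simps)
      hence "vv s = (1 - c * s) powr a / (1 - c) powr a"
        unfolding vv_def using hc s by (simp add: powr_divide)
      hence "B * (1 - vv s) = b * d * (1 - c) powr a - b * d * (1 - c * s) powr a"
        using hc by (simp add: B_def field_simps)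
      hence "1 + B * (1 - vv s) = 1 + sgn a * b * d * ((1 - c * s) powr a - (1 - c) powr a)"
        using ha by (simp add: algebra_simps)
      thus ?thesis by (simp add: tdl_pgf_def)
    qed
    show "pgf L s = tdl_pgf a b c d s"
      using s by (intro pgf_from_nn[OF Ls]) (auto simp: LI alg[symmetric])
  qed
  thus ?thesis unfolding L_def Qk_def B_def \<theta>_def .
qed



lemma pgf_nn:
  assumes P: "prob_space L" and L: "sets L = sets (count_space UNIV)" and s: "0 \<le> s" "s \<le> 1"
  shows "(\<integral>\<^sup>+ k. ennreal (s ^ k) \<partial>L) = ennreal (pgf L s)"
proof -
  interpret prob_space L by (rule P)
  have m: "(\<lambda>k. s ^ k) \<in> borel_measurable L"
    by (subst measurable_cong_sets[OF L refl]) simp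
  have "integrable L (\<lambda>k. s ^ k)"
    by (rule integrable_const_bound[where B=1]) (use s m in \<open>auto simp: power_le_one\<close>)
  thus ?thesis unfolding pgf_def using s by (intro nn_integral_eq_integral) auto
qed

lemma nb_pow:
  assumes hc: "0 < c" "c < 1" and s: "0 \<le> s" "s \<le> 1"
  shows "nb_pgf c (- a * real z) s = nb_pgf c (- a) s ^ z"
proof -
  have "1 - c * s > 0" using hc s by (smt (verit) mult_left_le)
  hence pos: "(1 - c) / (1 - c * s) > 0" using hc by simp
  define x where "x = (1 - c) / (1 - c * s)"
  have "x powr (- a * real z) = (x powr (- a)) powr (real z)" by (simp add: powr_powr)
  also have "\<dots> = (x powr (- a)) ^ z"
  proof -
    have "x > 0" unfolding x_def by (rule pos)
    hence "x \<noteq> 0" by simp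
    hence "0 < x powr (- a)" by simp
    thus ?thesis by (rule powr_realpow)
  qed
  finally show ?thesis unfolding nb_pgf_def x_def .
qed

lemma nb_range:
  assumes hc: "0 < c" "c < 1" and s: "0 \<le> s" "s \<le> 1" and a: "a < 0"
  shows "0 \<le> nb_pgf c (- a) s" "nb_pgf c (- a) s \<le> 1"
proof -
  have cs: "1 - c * s \<ge> 1 - c" using hc s by (simp add: mult_left_le)
  have "1 - c * s > 0" using hc s by (smt (verit) mult_left_le)
  note p = this
  have q1: "0 < (1 - c) / (1 - c * s)" using p hc by simp
  have q2: "(1 - c) / (1 - c * s) \<le> 1" using p cs by (simp add: divide_le_eq_1)
  note q = q1 q2
  show "0 \<le> nb_pgf c (- a) s" unfolding nb_pgf_def by simp
  show "nb_pgf c (- a) s \<le> 1" unfolding nb_pgf_def using q a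
    using powr_mono2[of "- a" "(1 - c) / (1 - c * s)" 1] q a by simp
qed

lemma nb_compose:
  fixes a b c d :: real
  assumes ha: "a < 0" and hb: "b > 0" and hc: "0 < c" "c < 1" and hd: "d > 0"
    and s: "0 \<le> s" "s \<le> 1"
  shows "nb_pgf (b * d * (1 - c) powr a / (1 + b * d * (1 - c) powr a)) (1 / d) (nb_pgf c (- a) s)
         = tdl_pgf a b c d s"
proof -
  define B where "B = b * d * (1 - c) powr a"
  define h where "h = nb_pgf c (- a) s"
  have Bp: "B > 0" using hb hd hc by (simp add: B_def)
  have cs: "1 - c * s > 0" using hc s by (smt (verit) mult_left_le)
  have hh: "h = (1 - c * s) powr a / (1 - c) powr a"
  proof -
    have "((1 - c) / (1 - c * s)) powr (- a) = (1 - c) powr (- a) / (1 - c * s) powr (- a)"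
      using cs hc by (auto intro: powr_divide)
    from this show ?thesis by (simp add: h_def nb_pgf_def powr_minus divide_inverse)
  qed
  have h1: "h \<le> 1" unfolding h_def using nb_range[OF hc s ha] by simp
  have pos: "1 + B - B * h > 0" using Bp h1
    by (smt (verit) mult_left_le)
  have "(1 - B / (1 + B)) / (1 - B / (1 + B) * h) = 1 / (1 + B - B * h)"
    using Bp pos by (simp add: field_simps)
  hence e1: "nb_pgf (B / (1 + B)) (1 / d) h = (1 + B - B * h) powr (- 1 / d)"
    unfolding nb_pgf_def using pos by (simp add: powr_minus divide_inverse inverse_powr)
  have e2: "1 + B - B * h = 1 + sgn a * b * d * ((1 - c * s) powr a - (1 - c) powr a)"
    using ha hc by (simp add: hh B_def field_simps)
  show ?thesis unfolding tdl_pgf_def h_def[symmetric] B_def[symmetric] by (simp only: e1 e2)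
qed

lemma part2:
  fixes a b c d :: real
  assumes ha: "a < 0" and hb: "b > 0" and hc: "0 < c" "c < 1" and hd: "d > 0"
    and Z: "is_NB (measure_pmf pZ) (b * d * (1 - c) powr a / (1 + b * d * (1 - c) powr a)) (1 / d)"
    and K0: "K 0 = return_pmf 0"
    and Kz: "\<forall>z>0. is_NB (measure_pmf (K z)) c (- a * real z)"
  shows "is_TDL (measure_pmf (bind_pmf pZ K)) a b c d"
  unfolding is_TDL_def law_with_pgf_def
proof (intro conjI ballI)
  show "prob_space (measure_pmf (bind_pmf pZ K))" by (rule measure_pmf.prob_space_axioms)
  show "sets (measure_pmf (bind_pmf pZ K)) = sets (count_space UNIV)" by simp
  fix s :: real assume "s \<in> {0..1}"
  hence s: "0 \<le> s" "s \<le> 1" by auto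
  define h where "h = nb_pgf c (- a) s"
  have hr: "0 \<le> h" "h \<le> 1" unfolding h_def using nb_range[OF hc s ha] by auto
  have inner: "(\<integral>\<^sup>+ k. ennreal (s ^ k) \<partial>K z) = ennreal (h ^ z)" for z
  proof (cases "z = 0")
    case True thus ?thesis using K0 by simp
  next
    case False
    have "(\<integral>\<^sup>+ k. ennreal (s ^ k) \<partial>K z) = ennreal (pgf (K z) s)"
      by (rule pgf_nn[OF measure_pmf.prob_space_axioms _ s]) simp
    also have "pgf (K z) s = nb_pgf c (- a * real z) s"
      using Kz False s unfolding is_NB_def law_with_pgf_def by auto
    finally show ?thesis using nb_pow[OF hc s, of a z] by (simp add: h_def)
  qed
  have "(\<integral>\<^sup>+ k. ennreal (s ^ k) \<partial>bind_pmf pZ K) = (\<integral>\<^sup>+ z. ennreal (h ^ z) \<partial>pZ)"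
    by (simp add: inner)
  also have "\<dots> = ennreal (pgf pZ h)"
    by (rule pgf_nn[OF measure_pmf.prob_space_axioms _ hr]) simp
  also have "pgf pZ h = tdl_pgf a b c d s"
    using Z hr unfolding is_NB_def law_with_pgf_def h_def
    using nb_compose[OF ha hb hc hd s] by auto
  finally show "pgf (measure_pmf (bind_pmf pZ K)) s = tdl_pgf a b c d s"
    using s by (intro pgf_from_nn) (auto simp: tdl_pgf_def)
qed



lemma decomp:
  assumes Z: "Z \<in> M \<rightarrow>\<^sub>M count_space (UNIV :: nat set)"
    and g: "\<And>n. g n \<in> borel_measurable M"
  shows "(\<integral>\<^sup>+ \<omega>. g (Z \<omega>) \<omega> \<partial>M) = (\<Sum>n. \<integral>\<^sup>+ \<omega>. ennreal (indicator {n} (Z \<omega>)) * g n \<omega> \<partial>M)"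
proof -
  have "(\<integral>\<^sup>+ \<omega>. g (Z \<omega>) \<omega> \<partial>M) = (\<integral>\<^sup>+ \<omega>. (\<Sum>n. ennreal (indicator {n} (Z \<omega>)) * g n \<omega>) \<partial>M)"
  proof (intro nn_integral_cong)
    fix \<omega>
    have "(\<lambda>n. ennreal (indicator {n} (Z \<omega>)) * g n \<omega>) = (\<lambda>n. if n = Z \<omega> then g n \<omega> else 0)"
      by (auto simp: indicator_def)
    thus "g (Z \<omega>) \<omega> = (\<Sum>n. ennreal (indicator {n} (Z \<omega>)) * g n \<omega>)"
      using sums_unique[OF sums_single[of "Z \<omega>" "\<lambda>n. g n \<omega>"]] by simp
  qed
  also have "\<dots> = (\<Sum>n. \<integral>\<^sup>+ \<omega>. ennreal (indicator {n} (Z \<omega>)) * g n \<omega> \<partial>M)"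
  proof (rule nn_integral_suminf)
    fix n
    have "(\<lambda>\<omega>. indicator {n} (Z \<omega>) :: real) \<in> borel_measurable M"
      using measurable_compose[OF Z, of "\<lambda>x. indicator {n} x :: real" borel] by simp
    thus "(\<lambda>\<omega>. ennreal (indicator {n} (Z \<omega>)) * g n \<omega>) \<in> borel_measurable M"
      using g by measurable
  qed
  finally show ?thesis .
qed



lemma nat_meas: "(f :: 'a \<Rightarrow> nat) \<in> M \<rightarrow>\<^sub>M count_space UNIV \<longleftrightarrow> f \<in> borel_measurable M"
proof -
  have "measurable M (count_space UNIV) = measurable M (borel :: nat measure)"
    by (rule measurable_cong_sets) (auto simp: sets_borel_eq_count_space)
  thus ?thesis by simp
qed

lemma nat_sum_meas:
  assumes "\<And>i. i \<in> A \<Longrightarrow> W i \<in> M \<rightarrow>\<^sub>M count_space (UNIV :: nat set)"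
  shows "(\<lambda>\<omega>. \<Sum>i\<in>A. W i \<omega>) \<in> M \<rightarrow>\<^sub>M count_space UNIV"
  using assms unfolding nat_meas by (intro borel_measurable_sum) auto

lemma part1:
  fixes a b c d :: real and M :: "'a measure" and Z :: "'a \<Rightarrow> nat" and W :: "nat \<Rightarrow> 'a \<Rightarrow> nat"
  assumes ha: "a < 0" and hb: "b > 0" and hc: "0 < c" "c < 1" and hd: "d > 0"
    and P: "prob_space M"
    and ind: "prob_space.indep_vars M (\<lambda>_. count_space UNIV)
          (\<lambda>i. case i of None \<Rightarrow> Z | Some j \<Rightarrow> W j) (insert None (Some ` {1..}))"
    and HZ: "is_NB (distr M (count_space UNIV) Z) (b * d * (1 - c) powr a / (1 + b * d * (1 - c) powr a)) (1 / d)"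
    and HW: "\<forall>i\<ge>1. is_NB (distr M (count_space UNIV) (W i)) c (- a)"
  shows "is_TDL (distr M (count_space UNIV) (\<lambda>\<omega>. \<Sum>i = 1..Z \<omega>. W i \<omega>)) a b c d"
proof -
  interpret prob_space M by (rule P)
  define X where "X = (\<lambda>i. case i of None \<Rightarrow> Z | Some j \<Rightarrow> W j)"
  define I where "I = insert None (Some ` {1::nat..})"
  have ind': "indep_vars (\<lambda>_. count_space UNIV) X I" using ind by (simp add: X_def I_def)
  have Zm: "Z \<in> M \<rightarrow>\<^sub>M count_space UNIV"
    using ind' unfolding indep_vars_def I_def X_def by auto
  have Wm: "W j \<in> M \<rightarrow>\<^sub>M count_space UNIV" if "j \<ge> 1" for j
    using ind' that unfolding indep_vars_def I_def X_def by auto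
  define S where "S \<omega> = (\<Sum>i = 1..Z \<omega>. W i \<omega>)" for \<omega>
  have Sm: "S \<in> M \<rightarrow>\<^sub>M count_space UNIV"
    unfolding S_def
  proof (rule measurable_compose_countable'[OF _ Zm])
    fix n :: nat
    show "(\<lambda>\<omega>. \<Sum>i = 1..n. W i \<omega>) \<in> M \<rightarrow>\<^sub>M count_space UNIV"
      using Wm by (intro nat_sum_meas) auto  
  qed simp
  have distrP: "prob_space (distr M (count_space UNIV) f)" if "f \<in> M \<rightarrow>\<^sub>M count_space UNIV" for f :: "'a \<Rightarrow> nat"
    by (rule prob_space_distr[OF that])
  have key: "(\<integral>\<^sup>+ \<omega>. ennreal (s ^ S \<omega>) \<partial>M) = ennreal (tdl_pgf a b c d s)" if s: "0 \<le> s" "s \<le> 1" for s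
  proof -
  define h where "h = nb_pgf c (- a) s"
  have hr: "0 \<le> h" "h \<le> 1" unfolding h_def using nb_range[OF hc s ha] by auto
  have Wh: "(\<integral>\<^sup>+ \<omega>. ennreal (s ^ W j \<omega>) \<partial>M) = ennreal h" if j: "j \<ge> 1" for j
  proof -
    have "(\<integral>\<^sup>+ \<omega>. ennreal (s ^ W j \<omega>) \<partial>M) = (\<integral>\<^sup>+ k. ennreal (s ^ k) \<partial>distr M (count_space UNIV) (W j))"
      by (subst nn_integral_distr[OF Wm[OF j]]) auto
    also have "\<dots> = ennreal (pgf (distr M (count_space UNIV) (W j)) s)"
      by (rule pgf_nn[OF distrP[OF Wm[OF j]] _ s]) simp
    also have "pgf (distr M (count_space UNIV) (W j)) s = h"
      using HW j s unfolding is_NB_def law_with_pgf_def h_def by auto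
    finally show ?thesis .
  qed
  have tm: "(\<integral>\<^sup>+ \<omega>. ennreal (indicator {n} (Z \<omega>)) * ennreal (s ^ (\<Sum>i = 1..n. W i \<omega>)) \<partial>M)
     = (\<integral>\<^sup>+ \<omega>. ennreal (indicator {n} (Z \<omega>)) \<partial>M) * ennreal (h ^ n)" for n
  proof -
    define J where "J = insert None (Some ` {1..n})"
    define G where "G i x = (case i of None \<Rightarrow> ennreal (indicator {n} x) | Some j \<Rightarrow> ennreal (s ^ x))" for i :: "nat option" and x :: nat
    have JI: "J \<subseteq> I" unfolding J_def I_def by auto
    have fin: "finite J" unfolding J_def by simp
    have indJ: "indep_vars (\<lambda>_. borel) (\<lambda>i \<omega>. G i (X i \<omega>)) J"
      by (rule indep_vars_compose2[OF indep_vars_subset[OF ind' JI]]) simp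
    have prodJ: "(\<Prod>i\<in>J. F i) = F None * (\<Prod>j\<in>{1..n}. F (Some j))" for F :: "nat option \<Rightarrow> ennreal"
      unfolding J_def by (subst prod.insert) (auto simp: prod.reindex)
    have "(\<integral>\<^sup>+ \<omega>. (\<Prod>i\<in>J. G i (X i \<omega>)) \<partial>M) = (\<Prod>i\<in>J. \<integral>\<^sup>+ \<omega>. G i (X i \<omega>) \<partial>M)"
      by (rule indep_vars_nn_integral[OF fin indJ]) simp
    also have "(\<lambda>\<omega>. \<Prod>i\<in>J. G i (X i \<omega>)) = (\<lambda>\<omega>. ennreal (indicator {n} (Z \<omega>)) * ennreal (s ^ (\<Sum>i = 1..n. W i \<omega>)))"
    proof
      fix \<omega>
      have "(\<Prod>j\<in>{1..n}. ennreal (s ^ W j \<omega>)) = ennreal (\<Prod>j\<in>{1..n}. s ^ W j \<omega>)"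
        using s by (intro prod_ennreal) auto
      also have "(\<Prod>j\<in>{1..n}. s ^ W j \<omega>) = s ^ (\<Sum>i = 1..n. W i \<omega>)" by (simp add: power_sum)
      finally show "(\<Prod>i\<in>J. G i (X i \<omega>)) = ennreal (indicator {n} (Z \<omega>)) * ennreal (s ^ (\<Sum>i = 1..n. W i \<omega>))"
        unfolding prodJ by (simp add: G_def X_def)
    qed
    also have "(\<Prod>i\<in>J. \<integral>\<^sup>+ \<omega>. G i (X i \<omega>) \<partial>M) = (\<integral>\<^sup>+ \<omega>. ennreal (indicator {n} (Z \<omega>)) \<partial>M) * ennreal h ^ n"
      unfolding prodJ using Wh by (simp add: G_def X_def)
    finally show ?thesis using hr by (simp add: ennreal_power)
  qed
  have msum: "(\<lambda>\<omega>. ennreal (s ^ (\<Sum>i = 1..n. W i \<omega>))) \<in> borel_measurable M" for n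
  proof -
    have "(\<lambda>\<omega>. \<Sum>i = 1..n. W i \<omega>) \<in> M \<rightarrow>\<^sub>M count_space UNIV"
      using Wm by (intro nat_sum_meas) auto
    thus ?thesis by (rule measurable_compose) simp
  qed
  have mi: "(\<lambda>\<omega>. ennreal (indicator {n} (Z \<omega>) :: real)) \<in> borel_measurable M" for n
    using measurable_compose[OF Zm, of "\<lambda>x. ennreal (indicator {n} x :: real)" borel] by simp
  have mh: "(\<lambda>\<omega>. ennreal (h ^ n)) \<in> borel_measurable M" for n by simp
  have "(\<integral>\<^sup>+ \<omega>. ennreal (s ^ S \<omega>) \<partial>M) = (\<Sum>n. (\<integral>\<^sup>+ \<omega>. ennreal (indicator {n} (Z \<omega>)) \<partial>M) * ennreal (h ^ n))"
    unfolding S_def using decomp[of Z M "\<lambda>n \<omega>. ennreal (s ^ (\<Sum>i = 1..n. W i \<omega>))", OF Zm msum] tm by simp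
  also have "\<dots> = (\<integral>\<^sup>+ \<omega>. ennreal (h ^ Z \<omega>) \<partial>M)"
    using decomp[of Z M "\<lambda>n \<omega>. ennreal (h ^ n)", OF Zm mh] by (simp add: nn_integral_multc[OF mi])
  also have "\<dots> = (\<integral>\<^sup>+ k. ennreal (h ^ k) \<partial>distr M (count_space UNIV) Z)"
    by (subst nn_integral_distr[OF Zm]) auto
  also have "\<dots> = ennreal (pgf (distr M (count_space UNIV) Z) h)"
    by (rule pgf_nn[OF distrP[OF Zm] _ hr]) simp
  also have "pgf (distr M (count_space UNIV) Z) h = tdl_pgf a b c d s"
    using HZ hr unfolding is_NB_def law_with_pgf_def h_def
    using nb_compose[OF ha hb hc hd s] by auto
  finally show ?thesis .
  qed
  show ?thesis
    unfolding is_TDL_def law_with_pgf_def S_def[symmetric]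
  proof (intro conjI ballI)
    show "prob_space (distr M (count_space UNIV) S)" by (rule distrP[OF Sm])
    show "sets (distr M (count_space UNIV) S) = sets (count_space UNIV)" by simp
    fix s :: real assume "s \<in> {0..1}"
    hence s: "0 \<le> s" "s \<le> 1" by auto
    show "pgf (distr M (count_space UNIV) S) s = tdl_pgf a b c d s"
    proof (rule pgf_from_nn)
      show "(\<integral>\<^sup>+ k. ennreal (s ^ k) \<partial>distr M (count_space UNIV) S) = ennreal (tdl_pgf a b c d s)"
        using key[OF s] by (subst nn_integral_distr[OF Sm]) auto
    qed (use s in \<open>auto simp: tdl_pgf_def\<close>)
  qed
qed


theorem mainTheorem11:
  fixes a b c d :: real
  assumes ha: "a < 0" and hb: "b > 0" and hc: "0 < c" "c < 1" and hd: "d > 0"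
  defines "\<pi>\<^sub>0 \<equiv> b * d * (1 - c) powr a / (1 + b * d * (1 - c) powr a)"
  shows
    \<comment> \<open>(i) random sum of i.i.d. NB(c,-a) variables, Z ~ NB(pi0, 1/d) independent\<close>
    "(\<forall>(M :: 'a measure) (Z :: 'a \<Rightarrow> nat) (W :: nat \<Rightarrow> 'a \<Rightarrow> nat).
        prob_space M \<longrightarrow>
        prob_space.indep_vars M (\<lambda>_. count_space UNIV)
          (\<lambda>i. case i of None \<Rightarrow> Z | Some j \<Rightarrow> W j) (insert None (Some ` {1..})) \<longrightarrow>
        is_NB (distr M (count_space UNIV) Z) \<pi>\<^sub>0 (1 / d) \<longrightarrow>
        (\<forall>i\<ge>1. is_NB (distr M (count_space UNIV) (W i)) c (- a)) \<longrightarrow>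
        is_TDL (distr M (count_space UNIV) (\<lambda>\<omega>. \<Sum>i = 1..Z \<omega>. W i \<omega>)) a b c d)
   \<and>
    \<comment> \<open>(ii) mixture: X | Z ~ NB(c, -a Z), point mass at 0 if Z = 0\<close>
    (\<forall>(pZ :: nat pmf) (K :: nat \<Rightarrow> nat pmf).
        is_NB (measure_pmf pZ) \<pi>\<^sub>0 (1 / d) \<longrightarrow>
        K 0 = return_pmf 0 \<longrightarrow>
        (\<forall>z>0. is_NB (measure_pmf (K z)) c (- a * real z)) \<longrightarrow>
        is_TDL (measure_pmf (bind_pmf pZ K)) a b c d)
   \<and>
    \<comment> \<open>(iii) Gamma-Poisson-Gamma-Poisson hierarchy\<close>
    is_TDL (gamma_law (1 / d) (b * d * (1 - c) powr a) \<bind> (\<lambda>g\<^sub>1.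
              poisson_law g\<^sub>1 \<bind> (\<lambda>n.
              gamma_law (- a * real n) (c / (1 - c)) \<bind> (\<lambda>g\<^sub>2.
              poisson_law g\<^sub>2)))) a b c d"
  unfolding \<pi>\<^sub>0_def
  using part1[OF ha hb hc hd] part2[OF ha hb hc hd] part3[OF ha hb hc hd]
  by blast

end
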